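(* Let $\kappa>0$ be a cardinal, $K$ a field, and $R$ the $K$-algebra $K^\kappa$ (direct product of $\kappa$ copies of $K$). If $\kappa$ is finite, then $R$ has a strong multiplicative basis; if $\kappa$ is infinite, then $R$ has no bounded basis.
   Context: Let $B$ be a $K$-linear basis of a $K$-algebra $R$. For $r\in R$ write $r=\sum_{b\in B} b k_b$ and let $\mathrm{supp}(r)=\{b\mid k_b\neq 0\}$, $\mathrm{cs}(r)=|\mathrm{supp}(r)|$. For $1\le k<\omega$, $B$ is $k$-bounded if $\mathrm{cs}(bb')\le k$ for all $b,b'\in B$; $B$ is bounded if it is $k$-bounded for some $1 \le k<\omega$. $B$ is a strong multiplicative basis if $bb'\in B$ for all $b,b'\in B$. *)

theory Defs
  imports Complex_Main "HOL-Library.Function_Algebras"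
begin

text \<open>The K-algebra R = K^kappa is modelled as the type of functions from an index
type 'i (kappa = |'i|, automatically > 0) to the field 'k, with pointwise operations.\<close>

definition fscale :: "'k::field \<Rightarrow> ('i \<Rightarrow> 'k) \<Rightarrow> ('i \<Rightarrow> 'k)" where
  "fscale c f = (\<lambda>i. c * f i)"

definition fmult :: "('i \<Rightarrow> 'k::field) \<Rightarrow> ('i \<Rightarrow> 'k) \<Rightarrow> ('i \<Rightarrow> 'k)" where
  "fmult f g = (\<lambda>i. f i * g i)"

lemma vector_space_fscale: "vector_space (fscale :: 'k::field \<Rightarrow> ('i \<Rightarrow> 'k) \<Rightarrow> _)"
  by unfold_locales (auto simp: fscale_def algebra_simps fun_eq_iff)

definition is_basis :: "('i \<Rightarrow> 'k::field) set \<Rightarrow> bool" where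
  "is_basis B \<longleftrightarrow> \<not> module.dependent fscale B \<and> module.span fscale B = UNIV"

definition supp :: "('i \<Rightarrow> 'k::field) set \<Rightarrow> ('i \<Rightarrow> 'k) \<Rightarrow> ('i \<Rightarrow> 'k) set" where
  "supp B r = {b \<in> B. module.representation fscale B r b \<noteq> 0}"

definition cs :: "('i \<Rightarrow> 'k::field) set \<Rightarrow> ('i \<Rightarrow> 'k) \<Rightarrow> nat" where
  "cs B r = card (supp B r)"

definition k_bounded :: "nat \<Rightarrow> ('i \<Rightarrow> 'k::field) set \<Rightarrow> bool" where
  "k_bounded k B \<longleftrightarrow> (\<forall>b\<in>B. \<forall>b'\<in>B. cs B (fmult b b') \<le> k)"

definition bounded_basis :: "('i \<Rightarrow> 'k::field) set \<Rightarrow> bool" where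
  "bounded_basis B \<longleftrightarrow> is_basis B \<and> (\<exists>k. 1 \<le> k \<and> k_bounded k B)"

definition strong_multiplicative_basis :: "('i \<Rightarrow> 'k::field) set \<Rightarrow> bool" where
  "strong_multiplicative_basis B \<longleftrightarrow> is_basis B \<and> (\<forall>b\<in>B. \<forall>b'\<in>B. fmult b b' \<in> B)"

end

theory Submission
  imports Defs "HOL-Library.Nat_Bijection"
begin


interpretation V: vector_space "fscale :: 'k::field \<Rightarrow> ('i \<Rightarrow> 'k) \<Rightarrow> ('i \<Rightarrow> 'k)"
  by (rule vector_space_fscale)

lemma sum_app: "(\<Sum>a\<in>A. f a) i = (\<Sum>a\<in>A. f a i)"
  by (induction A rule: infinite_finite_induct) auto

lemma fscale_app: "fscale c f i = c * f i" by (simp add: fscale_def)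
lemma fmult_app: "fmult f g i = f i * g i" by (simp add: fmult_def)

lemma basisD: assumes "is_basis B" shows "V.independent B" "V.span B = UNIV"
  using assms by (auto simp: is_basis_def)

lemma rep_add: "is_basis B \<Longrightarrow> V.representation B (x + y) = (\<lambda>b. V.representation B x b + V.representation B y b)"
  by (rule V.representation_add) (auto simp: is_basis_def)

lemma rep_diff: "is_basis B \<Longrightarrow> V.representation B (x - y) = (\<lambda>b. V.representation B x b - V.representation B y b)"
  by (rule V.representation_diff) (auto simp: is_basis_def)

lemma rep_scale: "is_basis B \<Longrightarrow> V.representation B (fscale c x) = (\<lambda>b. c * V.representation B x b)"
  by (rule V.representation_scale) (auto simp: is_basis_def)

lemma rep_basis: "is_basis B \<Longrightarrow> u \<in> B \<Longrightarrow> V.representation B u = (\<lambda>v. if v = u then 1 else 0)"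
  by (rule V.representation_basis) (auto simp: is_basis_def)

lemma supp_finite: "finite (supp B x)"
  unfolding supp_def using V.finite_representation[of B x] by (auto elim: finite_subset[rotated])

lemma supp_sub: "supp B x \<subseteq> B" by (auto simp: supp_def)

lemma supp_alt: "supp B x = {b. V.representation B x b \<noteq> 0}"
  using V.representation_ne_zero by (auto simp: supp_def)

lemma in_span_supp: "is_basis B \<Longrightarrow> x \<in> V.span (supp B x)"
proof -
  assume b: "is_basis B"
  have "x = (\<Sum>b | V.representation B x b \<noteq> 0. fscale (V.representation B x b) b)"
    using V.sum_nonzero_representation_eq[of B x] basisD[OF b] by auto
  also have "\<dots> \<in> V.span (supp B x)"
    by (rule V.span_sum) (auto simp: supp_alt intro: V.span_scale V.span_base)
  finally show ?thesis .
qed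

lemma supp_span: "is_basis B \<Longrightarrow> T \<subseteq> B \<Longrightarrow> x \<in> V.span T \<Longrightarrow> supp B x \<subseteq> T"
proof
  fix b assume bb: "is_basis B" and T: "T \<subseteq> B" "x \<in> V.span T" and b: "b \<in> supp B x"
  have "V.representation B x = V.representation T x"
    by (rule V.representation_extend) (use bb T in \<open>auto simp: is_basis_def\<close>)
  with b show "b \<in> T" using V.representation_ne_zero[of T x b] by (auto simp: supp_alt)
qed

lemma cs_span: "is_basis B \<Longrightarrow> finite T \<Longrightarrow> T \<subseteq> B \<Longrightarrow> x \<in> V.span T \<Longrightarrow> cs B x \<le> card T"
  unfolding cs_def by (rule card_mono) (auto dest: supp_span)



lemma fmult_expand:
  assumes b: "is_basis B"
  shows "fmult x y = (\<Sum>a\<in>supp B x. \<Sum>c\<in>supp B y.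
      fscale (V.representation B x a * V.representation B y c) (fmult a c))"
proof -
  have ex: "x = (\<Sum>a\<in>supp B x. fscale (V.representation B x a) a)" for x
    using V.sum_nonzero_representation_eq[of B x] basisD[OF b] by (auto simp: supp_alt)
  have "fmult x y = fmult (\<Sum>a\<in>supp B x. fscale (V.representation B x a) a)
                          (\<Sum>c\<in>supp B y. fscale (V.representation B y c) c)"
    using ex[of x] ex[of y] by metis
  also have "\<dots> = (\<Sum>a\<in>supp B x. \<Sum>c\<in>supp B y.
      fscale (V.representation B x a * V.representation B y c) (fmult a c))"
    by (rule ext) (simp only: fmult_app fscale_app sum_app sum_product; simp add: mult_ac)
  finally show ?thesis .
qed

lemma cs_mult:
  assumes b: "is_basis B" and kb: "k_bounded k B"
  shows "cs B (fmult x y) \<le> k * cs B x * cs B y"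
proof -
  define T where "T = (\<Union>a\<in>supp B x. \<Union>c\<in>supp B y. supp B (fmult a c))"
  have fT: "finite T" unfolding T_def by (auto intro!: supp_finite)
  have TB: "T \<subseteq> B" unfolding T_def using supp_sub by blast
  have "fmult x y \<in> V.span T"
    apply (subst fmult_expand[OF b])
  proof (intro V.span_sum V.span_scale)
    fix a c assume "a \<in> supp B x" "c \<in> supp B y"
    then have "supp B (fmult a c) \<subseteq> T" unfolding T_def by blast
    then show "fmult a c \<in> V.span T"
      using in_span_supp[OF b, of "fmult a c"] V.span_mono by blast
  qed
  then have "cs B (fmult x y) \<le> card T" by (rule cs_span[OF b fT TB])
  also have "card T \<le> (\<Sum>a\<in>supp B x. card (\<Union>c\<in>supp B y. supp B (fmult a c)))"
    unfolding T_def by (rule card_UN_le) (rule supp_finite)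
  also have "\<dots> \<le> (\<Sum>a\<in>supp B x. \<Sum>c\<in>supp B y. card (supp B (fmult a c)))"
    by (intro sum_mono card_UN_le) (rule supp_finite)
  also have "\<dots> \<le> (\<Sum>a\<in>supp B x. \<Sum>c\<in>supp B y. k)"
  proof (intro sum_mono)
    fix a c assume "a \<in> supp B x" "c \<in> supp B y"
    then show "card (supp B (fmult a c)) \<le> k"
      using kb supp_sub unfolding k_bounded_def cs_def by blast
  qed
  also have "\<dots> = k * cs B x * cs B y" by (simp add: cs_def)
  finally show ?thesis .
qed



lemma indep_le_dim:
  assumes "finite T" "W \<subseteq> V.span T" "S \<subseteq> W" "V.independent S"
  shows "card S \<le> V.dim (W :: ('i \<Rightarrow> 'k::field) set)"
proof -
  obtain A where A: "A \<subseteq> W" "V.independent A" "W \<subseteq> V.span A" "card A = V.dim W"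
    using V.basis_exists by blast
  have "finite A" using V.independent_span_bound[of T A] A assms by auto
  then have "card S \<le> card A"
    using V.independent_span_bound[of A S] A assms by auto
  with A show ?thesis by simp
qed

lemma supp_basis: "is_basis B \<Longrightarrow> u \<in> B \<Longrightarrow> supp B u = {u}"
  by (auto simp: supp_alt rep_basis)

lemma dimL:
  assumes b: "is_basis B"
  shows "finite T \<Longrightarrow> T \<subseteq> B \<Longrightarrow> V.subspace W \<Longrightarrow> W \<subseteq> V.span T \<Longrightarrow> (\<forall>w\<in>W. cs B w \<le> N)
    \<Longrightarrow> V.dim W \<le> N"
proof (induction T arbitrary: W N rule: finite_induct)
  case empty
  then show ?case using V.dim_le_card[of W "{}"] by simp
next
  case (insert u T0)
  have uB: "u \<in> B" and T0B: "T0 \<subseteq> B" using insert by auto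
  define p where "p x = x - fscale (V.representation B x u) u" for x
  have rep_p: "V.representation B (p x) = (V.representation B x)(u := 0)" for x
    unfolding p_def using b uB by (intro ext) (auto simp: rep_diff rep_scale rep_basis)
  have supp_p: "supp B (p x) = supp B x - {u}" for x
    by (auto simp: supp_alt rep_p)
  have lin: "Vector_Spaces.linear fscale fscale p"
    unfolding Vector_Spaces.linear_iff
    using vector_space_fscale b uB
    by (auto simp: p_def rep_add rep_scale fun_eq_iff fscale_app algebra_simps)
  interpret P: Vector_Spaces.linear fscale fscale p by (rule lin)
  have pT0: "p x \<in> V.span T0" if "x \<in> V.span (insert u T0)" for x
  proof -
    have "supp B x \<subseteq> insert u T0" using supp_span[OF b _ that] insert by auto
    then have "supp B (p x) \<subseteq> T0" by (auto simp: supp_p)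
    then show ?thesis using in_span_supp[OF b, of "p x"] V.span_mono by blast
  qed
  define W' where "W' = p ` W"
  have sW': "V.subspace W'" unfolding W'_def by (rule P.subspace_image) (rule insert.prems)
  have W'T0: "W' \<subseteq> V.span T0" unfolding W'_def using pT0 insert.prems by auto
  have decomp: "x = p x + fscale (V.representation B x u) u" for x by (simp add: p_def)
  show ?case
  proof (cases "u \<in> W")
    case True
    have pW: "p w \<in> W" if "w \<in> W" for w
      unfolding p_def using that True insert.prems(2)
      by (intro V.subspace_diff V.subspace_scale) auto
    have "cs B (p w) \<le> N - 1" if "w \<in> W" for w
    proof -
      have "p w + u \<in> W" using pW that True insert.prems(2) by (intro V.subspace_add) auto
      then have le: "cs B (p w + u) \<le> N" using insert.prems by auto
      have "supp B (p w + u) = insert u (supp B (p w))"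
        using b uB by (auto simp: supp_alt rep_add rep_p rep_basis)
      moreover have "u \<notin> supp B (p w)" by (simp add: supp_p)
      ultimately have "cs B (p w + u) = cs B (p w) + 1"
        by (simp add: cs_def supp_finite)
      with le show ?thesis by simp
    qed
    then have dW': "V.dim W' \<le> N - 1"
      using insert.IH[OF T0B sW' W'T0] unfolding W'_def by auto
    obtain A' where A': "A' \<subseteq> W'" "V.independent A'" "W' \<subseteq> V.span A'" "card A' = V.dim W'"
      using V.basis_exists by blast
    have fA': "finite A'" using V.independent_span_bound[of T0 A'] A' W'T0 insert by auto
    have "W \<subseteq> V.span (insert u A')"
    proof
      fix w assume w: "w \<in> W"
      have "p w \<in> V.span A'" using w A' unfolding W'_def by auto
      then have "p w \<in> V.span (insert u A')" using V.span_mono[of A' "insert u A'"] by auto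
      moreover have "fscale (V.representation B w u) u \<in> V.span (insert u A')"
        by (intro V.span_scale V.span_base) auto
      ultimately show "w \<in> V.span (insert u A')"
        using V.span_add decomp[of w] by metis
    qed
    then have "V.dim W \<le> card (insert u A')" using fA' by (intro V.dim_le_card) auto
    moreover have "card (insert u A') \<le> V.dim W' + 1" using fA' A' by (simp add: card_insert_if)
    moreover have "1 \<le> N" using insert.prems True b uB by (auto simp: cs_def supp_basis)
    ultimately show ?thesis using dW' by linarith
  next
    case False
    have inj: "inj_on p W"
    proof
      fix x y assume xy: "x \<in> W" "y \<in> W" "p x = p y"
      let ?c = "V.representation B x u - V.representation B y u"
      have eq: "x - y = fscale ?c u"
        using xy(3) unfolding p_def by (simp add: fun_eq_iff fscale_app algebra_simps)
      have "x - y \<in> W" using xy insert.prems(2) by (intro V.subspace_diff)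
      show "x = y"
      proof (cases "?c = 0")
        case True then show ?thesis using eq by (simp add: fun_eq_iff fscale_app)
      next
        case c: False
        have "fscale (inverse ?c) (x - y) \<in> W"
          using \<open>x - y \<in> W\<close> insert.prems(2) by (intro V.subspace_scale)
        moreover have "fscale (inverse ?c) (x - y) = u" using c eq by (simp add: fun_eq_iff fscale_app)
        ultimately show ?thesis using False by simp
      qed
    qed
    obtain A where A: "A \<subseteq> W" "V.independent A" "W \<subseteq> V.span A" "card A = V.dim W"
      using V.basis_exists by blast
    have "V.span A \<subseteq> W" using A(1) insert.prems(2) by (rule V.span_minimal)
    then have injA: "inj_on p (V.span A)" using inj inj_on_subset by blast
    have indA: "V.independent (p ` A)" by (rule P.independent_injective_image[OF A(2) injA])
    have "card (p ` A) = card A"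
      using injA V.span_superset by (intro card_image) (blast intro: inj_on_subset)
    moreover have "card (p ` A) \<le> V.dim W'"
      by (rule indep_le_dim[OF _ W'T0 _ indA]) (use insert A in \<open>auto simp: W'_def\<close>)
    moreover have "V.dim W' \<le> N"
    proof (rule insert.IH[OF T0B sW' W'T0], rule ballI)
      fix w' assume "w' \<in> W'"
      then obtain w where "w \<in> W" "w' = p w" by (auto simp: W'_def)
      then have "cs B w' \<le> cs B w"
        unfolding cs_def by (intro card_mono) (auto simp: supp_finite supp_p)
      then show "cs B w' \<le> N" using \<open>w \<in> W\<close> insert.prems by fastforce
    qed
    ultimately show ?thesis using A by linarith
  qed
qed



definition delta :: "'i \<Rightarrow> 'i \<Rightarrow> 'k::field" where "delta p = (\<lambda>i. if i = p then 1 else 0)"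

lemma delta_inj: "inj (delta :: 'i \<Rightarrow> 'i \<Rightarrow> 'k::field)"
proof
  fix p q :: 'i assume "(delta p :: 'i \<Rightarrow> 'k) = delta q"
  then have "(delta p :: 'i \<Rightarrow> 'k) p = delta q p" by simp
  then show "p = q" by (auto simp: delta_def split: if_splits)
qed

lemma delta_indep: "V.independent ((delta :: 'i \<Rightarrow> 'i \<Rightarrow> 'k::field) ` P)"
  unfolding V.independent_explicit_module
proof (intro allI impI)
  fix t and u :: "('i \<Rightarrow> 'k) \<Rightarrow> 'k" and v
  assume t: "finite t" "t \<subseteq> delta ` P" and s: "(\<Sum>v\<in>t. fscale (u v) v) = 0" and v: "v \<in> t"
  then obtain p where p: "v = delta p" by auto
  have "(\<Sum>v\<in>t. fscale (u v) v) p = 0" using s by simp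
  then have "(\<Sum>w\<in>t. u w * w p) = 0" by (simp add: sum_app fscale_app)
  moreover have "(\<Sum>w\<in>t. u w * w p) = (\<Sum>w\<in>t. if w = v then u v else 0)"
  proof (rule sum.cong)
    fix w assume "w \<in> t"
    then obtain q where q: "w = delta q" using t by auto
    have "w = v \<longleftrightarrow> q = p" using delta_inj unfolding p q inj_def by metis
    then show "u w * w p = (if w = v then u v else 0)"
      by (auto simp: q delta_def)
  qed simp
  ultimately show "u v = 0" using t v by simp
qed

lemma big:
  assumes b: "is_basis (B :: ('i \<Rightarrow> 'k::field) set)" and P: "finite P"
  shows "\<exists>z :: 'i \<Rightarrow> 'k. (\<forall>i. i \<notin> P \<longrightarrow> z i = 0) \<and> card P \<le> cs B z"
proof (rule ccontr)
  assume "\<not> ?thesis"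
  then have lt: "\<And>z :: 'i \<Rightarrow> 'k. (\<forall>i. i \<notin> P \<longrightarrow> z i = 0) \<Longrightarrow> cs B z < card P" by (meson not_le)
  define S where "S = (delta :: 'i \<Rightarrow> 'i \<Rightarrow> 'k) ` P"
  have cS: "card S = card P" unfolding S_def by (rule card_image) (rule inj_on_subset[OF delta_inj], simp)
  have "0 < card P" using lt[of 0] by simp
  have subZ: "V.span S \<subseteq> {z. \<forall>i. i \<notin> P \<longrightarrow> z i = 0}"
  proof (rule V.span_minimal)
    show "S \<subseteq> {z. \<forall>i. i \<notin> P \<longrightarrow> z i = 0}" by (auto simp: S_def delta_def)
    show "V.subspace {z :: 'i \<Rightarrow> 'k. \<forall>i. i \<notin> P \<longrightarrow> z i = 0}"
      by (auto simp: V.subspace_def fscale_app)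
  qed
  define T where "T = (\<Union>s\<in>S. supp B s)"
  have fT: "finite T" unfolding T_def S_def using P by (auto intro: supp_finite)
  have TB: "T \<subseteq> B" unfolding T_def using supp_sub by blast
  have "S \<subseteq> V.span T"
  proof
    fix s assume "s \<in> S"
    then have "supp B s \<subseteq> T" unfolding T_def by blast
    then show "s \<in> V.span T" using in_span_supp[OF b, of s] V.span_mono by blast
  qed
  then have WT: "V.span S \<subseteq> V.span T" by (rule V.span_minimal) simp
  have lt': "\<forall>w\<in>V.span S. cs B w \<le> card P - 1"
  proof
    fix w assume "w \<in> V.span S"
    then have "cs B w < card P" using subZ by (intro lt) blast
    then show "cs B w \<le> card P - 1" by simp
  qed
  have "V.dim (V.span S) \<le> card P - 1"
    by (rule dimL[OF b fT TB V.subspace_span WT lt'])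
  moreover have "V.dim (V.span S) = card S"
    unfolding S_def by (rule V.dim_span_eq_card_independent) (rule delta_indep)
  ultimately show False using cS \<open>0 < card P\<close> by simp
qed



lemma no_bounded:
  assumes inf: "infinite (UNIV :: 'i set)"
  shows "\<not> bounded_basis (B :: ('i \<Rightarrow> 'k::field) set)"
proof
  assume "bounded_basis B"
  then obtain k where b: "is_basis B" and kb: "k_bounded k B" by (auto simp: bounded_basis_def)
  obtain f :: "nat \<Rightarrow> 'i" where f: "inj f"
    using inf unfolding infinite_iff_countable_subset by auto
  define g where "g = f \<circ> prod_encode"
  have g: "inj g" unfolding g_def using f inj_prod_encode[of UNIV] by (rule inj_compose)
  define J where "J n = g ` ({n} \<times> UNIV)" for n
  define fn :: "nat \<Rightarrow> 'i \<Rightarrow> 'k" where "fn n = (\<lambda>i. if i \<in> J n then 1 else 0)" for n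
  have "\<exists>z :: 'i \<Rightarrow> 'k. (\<forall>i. i \<notin> J n \<longrightarrow> z i = 0) \<and> n * k * cs B (fn n) < cs B z" for n
  proof -
    define m where "m = n * k * cs B (fn n)"
    define P where "P = g ` ({n} \<times> {..m})"
    have "card P = card ({n} \<times> {..m})" unfolding P_def
      by (rule card_image) (rule inj_on_subset[OF g], simp)
    then have cP: "card P = Suc m" by simp
    obtain z :: "'i \<Rightarrow> 'k" where z: "\<forall>i. i \<notin> P \<longrightarrow> z i = 0" "card P \<le> cs B z"
      using big[OF b, of P] unfolding P_def by auto
    have "P \<subseteq> J n" unfolding P_def J_def by auto
    then show ?thesis using z cP unfolding m_def by (intro exI[of _ z]) auto
  qed
  then have "\<forall>n. \<exists>z :: 'i \<Rightarrow> 'k. (\<forall>i. i \<notin> J n \<longrightarrow> z i = 0) \<and> n * k * cs B (fn n) < cs B z" by blast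
  then obtain y :: "nat \<Rightarrow> 'i \<Rightarrow> 'k" where
    yy: "\<forall>n. (\<forall>i. i \<notin> J n \<longrightarrow> y n i = 0) \<and> n * k * cs B (fn n) < cs B (y n)"
    by (rule choice[THEN exE])
  have y: "\<And>n. (\<forall>i. i \<notin> J n \<longrightarrow> y n i = 0)" "\<And>n. n * k * cs B (fn n) < cs B (y n)"
    using yy by auto
  define Y where "Y = (\<lambda>i. if i \<in> range g then y (fst (inv g i)) i else 0)"
  have fy: "fmult (fn n) Y = y n" for n
  proof (rule ext)
    fix i
    show "fmult (fn n) Y i = y n i"
    proof (cases "i \<in> J n")
      case True
      then obtain m where m: "i = g (n, m)" unfolding J_def by auto
      have "inv g i = (n, m)" unfolding m using g by (simp add: inv_f_f)
      then show ?thesis using True by (simp add: fmult_app fn_def Y_def m)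
    next
      case False
      then show ?thesis using y(1)[of n] by (simp add: fmult_app fn_def)
    qed
  qed
  define M where "M = cs B Y"
  have "cs B (y M) \<le> k * cs B (fn M) * M"
    using cs_mult[OF b kb, of "fn M" Y] unfolding fy M_def .
  moreover have "M * k * cs B (fn M) < cs B (y M)" by (rule y(2))
  ultimately show False by (simp add: mult_ac)
qed



lemma finite_smb:
  assumes fin: "finite (UNIV :: 'i set)"
  shows "\<exists>B :: ('i \<Rightarrow> 'k::field) set. strong_multiplicative_basis B"
proof -
  define n where "n = card (UNIV :: 'i set)"
  obtain h :: "'i \<Rightarrow> nat" where h: "bij_betw h UNIV {0..<n}"
    using ex_bij_betw_finite_nat[OF fin] unfolding n_def by blast
  have hinj: "h i = h j \<longleftrightarrow> i = j" for i j using h by (auto simp: bij_betw_def inj_def)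
  have hlt: "h i < n" for i using h by (auto simp: bij_betw_def)
  define c :: "nat \<Rightarrow> 'i \<Rightarrow> 'k" where "c k = (\<lambda>i. if h i \<le> k then 1 else 0)" for k
  define B where "B = c ` {..<n}"
  have mult: "fmult (c k) (c l) = c (min k l)" for k l
    by (rule ext) (simp add: fmult_app c_def)
  have fB: "finite B" unfolding B_def by simp
  have cB: "card B \<le> n" unfolding B_def using card_image_le[of "{..<n}" c] by simp
  have dB: "(delta i :: 'i \<Rightarrow> 'k) \<in> V.span B" for i
  proof (cases "h i = 0")
    case True
    have "delta i = c 0"
    proof (rule ext)
      fix j
      have "h j \<le> 0 \<longleftrightarrow> j = i" using True hinj[of j i] by auto
      then show "delta i j = c 0 j" by (auto simp: delta_def c_def)
    qed
    then show ?thesis using hlt[of i] True by (auto simp: B_def intro!: V.span_base)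
  next
    case False
    have "delta i = c (h i) - c (h i - 1)"
    proof (rule ext)
      fix j
      have "(h j \<le> h i \<and> \<not> h j \<le> h i - 1) \<longleftrightarrow> j = i" using False hinj[of j i] by auto
      then show "delta i j = (c (h i) - c (h i - 1)) j"
        by (auto simp: delta_def c_def)
    qed
    moreover have "c (h i) \<in> B" "c (h i - 1) \<in> B" using hlt[of i] by (auto simp: B_def)
    ultimately show ?thesis by (auto intro: V.span_diff V.span_base)
  qed
  have span: "V.span B = UNIV"
  proof (rule set_eqI, rule iffI)
    fix x :: "'i \<Rightarrow> 'k"
    have "x = (\<Sum>i\<in>UNIV. fscale (x i) (delta i))"
    proof (rule ext)
      fix j
      have "(\<Sum>i\<in>UNIV. x i * (if j = i then 1 else 0)) = (\<Sum>i\<in>UNIV. if j = i then x i else 0)"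
        by (rule sum.cong) auto
      then show "x j = (\<Sum>i\<in>UNIV. fscale (x i) (delta i)) j"
        by (simp add: sum_app fscale_app delta_def fin)
    qed
    also have "\<dots> \<in> V.span B" by (intro V.span_sum V.span_scale dB)
    finally show "x \<in> V.span B" .
  qed simp
  have indep: "V.independent B"
  proof
    assume "V.dependent B"
    then obtain a where a: "a \<in> B" "a \<in> V.span (B - {a})" unfolding V.dependent_def by blast
    have "B \<subseteq> V.span (B - {a})"
    proof
      fix b assume "b \<in> B"
      then show "b \<in> V.span (B - {a})"
        using a(2) by (cases "b = a") (auto intro: V.span_base)
    qed
    then have "V.span B \<subseteq> V.span (B - {a})" by (intro V.span_minimal V.subspace_span)
    then have sub: "range (delta :: 'i \<Rightarrow> 'i \<Rightarrow> 'k) \<subseteq> V.span (B - {a})" using span by blast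
    have "finite (B - {a})" using fB by blast
    from V.independent_span_bound[OF this delta_indep sub]
    have c1: "card (range (delta :: 'i \<Rightarrow> 'i \<Rightarrow> 'k)) \<le> card (B - {a})" by blast
    have c2: "card (range (delta :: 'i \<Rightarrow> 'i \<Rightarrow> 'k)) = n"
      unfolding n_def by (rule card_image) (rule delta_inj)
    have c3: "card (B - {a}) = card B - 1" using a fB by simp
    have c4: "0 < n" unfolding n_def using fin by (simp add: card_gt_0_iff)
    show False using c1 c2 c3 c4 cB by linarith
  qed
  have "strong_multiplicative_basis B"
    unfolding strong_multiplicative_basis_def is_basis_def
    using indep span by (auto simp: B_def mult simp del: min_less_iff_conj)
  then show ?thesis by blast
qed


theorem theorem5p6:
  shows "(finite (UNIV :: 'i set) \<longrightarrow>
           (\<exists>B :: ('i \<Rightarrow> 'k::field) set. strong_multiplicative_basis B)) \<and>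
         (infinite (UNIV :: 'i set) \<longrightarrow>
           \<not> (\<exists>B :: ('i \<Rightarrow> 'k::field) set. bounded_basis B))"
  using finite_smb no_bounded by blast

end
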